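(* Let $\beta_1,\beta_2>0$, $\tau\in(0,1)$, and suppose $(\bar x,\bar y)\in X\times\mathbb{R}^m$ satisfies the excessive gap condition $f(\bar x;\beta_2)\le d(\bar y;\beta_1)$. Set $\beta_1^+:=(1-\tau)\beta_1$, $\beta_2^+:=(1-\tau)\beta_2$ and define $$\hat x:=(1-\tau)\bar x+\tau x^*(\bar y;\beta_1),\qquad \bar y^+:=(1-\tau)\bar y+\tau y^*(\hat x;\beta_2^+),\qquad \bar x^+:=P(\hat x;\beta_2^+).$$ If $$\beta_1\beta_2\ge\frac{2\tau^2}{(1-\tau)^2}\max_{i=1,2}\frac{\|A_i\|^2}{\sigma_i},$$ then $(\bar x^+,\bar y^+)\in X\times\mathbb{R}^m$ and $f(\bar x^+;\beta_2^+)\le d(\bar y^+;\beta_1^+)$.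
   Context: All spaces carry the Euclidean inner product and norm $\|\cdot\|$; for a matrix, $\|\cdot\|$ is the induced operator norm. For $i=1,2$: $X_i\subset\mathbb{R}^{n_i}$ is nonempty, closed, convex and bounded; $\phi_i:\mathbb{R}^{n_i}\to\mathbb{R}$ is convex; $A_i\in\mathbb{R}^{m\times n_i}$; $b\in\mathbb{R}^m$. Write $x=(x_1,x_2)$, $X=X_1\times X_2$, $A=[A_1,A_2]$ (so $Ax=A_1x_1+A_2x_2$), $\phi(x)=\phi_1(x_1)+\phi_2(x_2)$. For $i=1,2$, $p_i$ is a prox-function of $X_i$: continuous and strongly convex on $X_i$ with convexity parameter $\sigma_i>0$, with prox-center $x_i^c=\arg\min_{x_i\in X_i}p_i(x_i)$ normalized so $p_i(x_i^c)=0$. For $\beta_1>0$, $d(y;\beta_1):=\min_{x\in X}\{\phi(x)+y^T(Ax-b)+\beta_1(p_1(x_1)+p_2(x_2))\}$, whose (unique) minimizer is denoted $x^*(y;\beta_1)=(x_1^*(y;\beta_1),x_2^*(y;\beta_1))$. For $\beta_2>0$, $y^*(x;\beta_2):=\frac{1}{\beta_2}(Ax-b)$ and $f(x;\beta_2):=\phi(x)+\frac{1}{2\beta_2}\|Ax-b\|^2$. With $L_i^\psi(\beta_2):=\frac{2\|A_i\|^2}{\beta_2}$, the proximal mapping is $P_i(\hat x;\beta_2):=\arg\min_{x_i\in X_i}\{\phi_i(x_i)+y^*(\hat x;\beta_2)^TA_i(x_i-\hat x_i)+\frac{L_i^\psi(\beta_2)}{2}\|x_i-\hat x_i\|^2\}$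 for $\hat x=(\hat x_1,\hat x_2)$, and $P(\hat x;\beta_2):=(P_1(\hat x;\beta_2),P_2(\hat x;\beta_2))$. *)

theory Defs
  imports "HOL-Analysis.Analysis"
begin

definition strongly_convex_on :: "'a::real_normed_vector set \<Rightarrow> ('a \<Rightarrow> real) \<Rightarrow> real \<Rightarrow> bool" where
  "strongly_convex_on S f \<sigma> \<longleftrightarrow> convex S \<and>
     (\<forall>x\<in>S. \<forall>y\<in>S. \<forall>t::real. 0 \<le> t \<and> t \<le> 1 \<longrightarrow>
        f ((1 - t) *\<^sub>R x + t *\<^sub>R y) \<le> (1 - t) * f x + t * f y - \<sigma> / 2 * t * (1 - t) * (norm (x - y))\<^sup>2)"

definition prox_function :: "'a::real_normed_vector set \<Rightarrow> ('a \<Rightarrow> real) \<Rightarrow> real \<Rightarrow> 'a \<Rightarrow> bool" where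
  "prox_function S p \<sigma> xc \<longleftrightarrow> \<sigma> > 0 \<and> continuous_on S p \<and> strongly_convex_on S p \<sigma> \<and>
     xc \<in> S \<and> (\<forall>x\<in>S. p xc \<le> p x) \<and> p xc = 0"

definition mnorm :: "real^'n^'m \<Rightarrow> real" where
  "mnorm M = onorm (\<lambda>x. M *v x)"

definition lagr ::
  "(real^'n1 \<Rightarrow> real) \<Rightarrow> (real^'n2 \<Rightarrow> real) \<Rightarrow> real^'n1^'m \<Rightarrow> real^'n2^'m \<Rightarrow> real^'m \<Rightarrow>
   (real^'n1 \<Rightarrow> real) \<Rightarrow> (real^'n2 \<Rightarrow> real) \<Rightarrow> real \<Rightarrow> real^'m \<Rightarrow> (real^'n1) \<times> (real^'n2) \<Rightarrow> real" where
  "lagr \<phi>1 \<phi>2 A1 A2 b p1 p2 \<beta>1 y x =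
     \<phi>1 (fst x) + \<phi>2 (snd x) + y \<bullet> (A1 *v fst x + A2 *v snd x - b) + \<beta>1 * (p1 (fst x) + p2 (snd x))"

definition dfun ::
  "(real^'n1) set \<Rightarrow> (real^'n2) set \<Rightarrow> (real^'n1 \<Rightarrow> real) \<Rightarrow> (real^'n2 \<Rightarrow> real) \<Rightarrow> real^'n1^'m \<Rightarrow> real^'n2^'m \<Rightarrow> real^'m \<Rightarrow>
   (real^'n1 \<Rightarrow> real) \<Rightarrow> (real^'n2 \<Rightarrow> real) \<Rightarrow> real^'m \<Rightarrow> real \<Rightarrow> real" where
  "dfun X1 X2 \<phi>1 \<phi>2 A1 A2 b p1 p2 y \<beta>1 = Inf (lagr \<phi>1 \<phi>2 A1 A2 b p1 p2 \<beta>1 y ` (X1 \<times> X2))"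

definition xstar ::
  "(real^'n1) set \<Rightarrow> (real^'n2) set \<Rightarrow> (real^'n1 \<Rightarrow> real) \<Rightarrow> (real^'n2 \<Rightarrow> real) \<Rightarrow> real^'n1^'m \<Rightarrow> real^'n2^'m \<Rightarrow> real^'m \<Rightarrow>
   (real^'n1 \<Rightarrow> real) \<Rightarrow> (real^'n2 \<Rightarrow> real) \<Rightarrow> real^'m \<Rightarrow> real \<Rightarrow> (real^'n1) \<times> (real^'n2)" where
  "xstar X1 X2 \<phi>1 \<phi>2 A1 A2 b p1 p2 y \<beta>1 =
     (SOME z. z \<in> X1 \<times> X2 \<and> (\<forall>w\<in>X1 \<times> X2. lagr \<phi>1 \<phi>2 A1 A2 b p1 p2 \<beta>1 y z \<le> lagr \<phi>1 \<phi>2 A1 A2 b p1 p2 \<beta>1 y w))"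

definition ystar :: "real^'n1^'m \<Rightarrow> real^'n2^'m \<Rightarrow> real^'m \<Rightarrow> (real^'n1) \<times> (real^'n2) \<Rightarrow> real \<Rightarrow> real^'m" where
  "ystar A1 A2 b x \<beta>2 = (1 / \<beta>2) *\<^sub>R (A1 *v fst x + A2 *v snd x - b)"

definition ffun :: "(real^'n1 \<Rightarrow> real) \<Rightarrow> (real^'n2 \<Rightarrow> real) \<Rightarrow> real^'n1^'m \<Rightarrow> real^'n2^'m \<Rightarrow> real^'m \<Rightarrow>
   (real^'n1) \<times> (real^'n2) \<Rightarrow> real \<Rightarrow> real" where
  "ffun \<phi>1 \<phi>2 A1 A2 b x \<beta>2 = \<phi>1 (fst x) + \<phi>2 (snd x) + 1 / (2 * \<beta>2) * (norm (A1 *v fst x + A2 *v snd x - b))\<^sup>2"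

definition Lpsi :: "real^'n^'m \<Rightarrow> real \<Rightarrow> real" where
  "Lpsi Ai \<beta>2 = 2 * (mnorm Ai)\<^sup>2 / \<beta>2"

text \<open>Block proximal step: argmin over Xi of phi_i(z) + yv^T A_i (z - xh) + L/2 ||z - xh||^2,
  where yv = y*(xhat; beta2) and xh is the i-th block of xhat.\<close>
definition proxblk :: "(real^'n) set \<Rightarrow> (real^'n \<Rightarrow> real) \<Rightarrow> real^'n^'m \<Rightarrow> real^'m \<Rightarrow> real^'n \<Rightarrow> real \<Rightarrow> real^'n" where
  "proxblk Xi \<phi>i Ai yv xh \<beta>2 =
     (SOME z. z \<in> Xi \<and> (\<forall>w\<in>Xi.
        \<phi>i z + yv \<bullet> (Ai *v (z - xh)) + Lpsi Ai \<beta>2 / 2 * (norm (z - xh))\<^sup>2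
        \<le> \<phi>i w + yv \<bullet> (Ai *v (w - xh)) + Lpsi Ai \<beta>2 / 2 * (norm (w - xh))\<^sup>2))"

definition Pmap :: "(real^'n1) set \<Rightarrow> (real^'n2) set \<Rightarrow> (real^'n1 \<Rightarrow> real) \<Rightarrow> (real^'n2 \<Rightarrow> real) \<Rightarrow>
   real^'n1^'m \<Rightarrow> real^'n2^'m \<Rightarrow> real^'m \<Rightarrow> (real^'n1) \<times> (real^'n2) \<Rightarrow> real \<Rightarrow> (real^'n1) \<times> (real^'n2)" where
  "Pmap X1 X2 \<phi>1 \<phi>2 A1 A2 b xh \<beta>2 =
     (proxblk X1 \<phi>1 A1 (ystar A1 A2 b xh \<beta>2) (fst xh) \<beta>2,
      proxblk X2 \<phi>2 A2 (ystar A1 A2 b xh \<beta>2) (snd xh) \<beta>2)"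

end

theory Submission
  imports Defs
begin

lemma keyq:
  fixes ub w :: "'a::real_inner" and \<tau> \<beta> :: real
  assumes "0 < \<tau>" "\<tau> < 1" "\<beta> > 0"
  shows "(norm ((1-\<tau>) *\<^sub>R ub + \<tau> *\<^sub>R w))\<^sup>2 / (2*((1-\<tau>)*\<beta>))
     \<le> (1-\<tau>) * ((norm ub)\<^sup>2 / (2*\<beta>)) + \<tau> * (((1/((1-\<tau>)*\<beta>)) *\<^sub>R ((1-\<tau>) *\<^sub>R ub + \<tau> *\<^sub>R w)) \<bullet> w)"
proof -
  have n: "(norm ((1-\<tau>) *\<^sub>R ub + \<tau> *\<^sub>R w))\<^sup>2 = (1-\<tau>)^2 * (ub \<bullet> ub) + 2*\<tau>*(1-\<tau>)*(ub \<bullet> w) + \<tau>^2*(w \<bullet> w)"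
    unfolding power2_norm_eq_inner by (simp add: inner_add_left inner_add_right inner_commute power2_eq_square algebra_simps)
  have i: "(((1/((1-\<tau>)*\<beta>)) *\<^sub>R ((1-\<tau>) *\<^sub>R ub + \<tau> *\<^sub>R w)) \<bullet> w) = ((1-\<tau>)*(ub \<bullet> w) + \<tau>*(w \<bullet> w)) / ((1-\<tau>)*\<beta>)"
    by (simp add: inner_add_left divide_simps)
  have ub: "(norm ub)\<^sup>2 = ub \<bullet> ub" by (simp add: power2_norm_eq_inner)
  have ww: "0 \<le> w \<bullet> w" by simp
  have d: "(1-\<tau>)*\<beta> > 0" using assms by simp
  have tw: "\<tau> * (w \<bullet> w) \<le> w \<bullet> w" using assms ww by (simp add: mult_left_le_one_le)
  show ?thesis unfolding n i ub using assms d ww tw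
    by (simp add: divide_simps power2_eq_square algebra_simps)
qed

lemma min_strong:
  fixes a f c :: real
  assumes "\<And>t. 0 < t \<Longrightarrow> t < 1 \<Longrightarrow> a \<le> (1-t)*a + t*f - t*(1-t)*c"
  shows "a + c \<le> f"
proof -
  have h: "(1-t)*c \<le> f - a" if "0<t" "t<1" for t
  proof -
    have "t*((1-t)*c) \<le> t*(f-a)" using assms[OF that] by (simp add: algebra_simps)
    thus ?thesis using that by simp
  qed
  have h2: "c/2 \<le> f - a" using h[of "1/2"] by simp
  show ?thesis
  proof (rule ccontr)
    assume "\<not> a + c \<le> f"
    hence lt: "f - a < c" by simp
    define t where "t = (c - (f-a))/(2*c)"
    have cpos: "c > 0" using h2 lt by linarith
    have "0 < t" "t < 1" using lt cpos h2 by (auto simp: t_def divide_simps)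
    from h[OF this] have "(1-t)*c \<le> f - a" .
    moreover have "(1-t)*c = (c + (f-a))/2" using cpos by (simp add: t_def field_simps)
    ultimately show False using lt by (simp add: field_simps)
  qed
qed

lemma norm_sum_sq: "(norm (a + b :: 'a::real_normed_vector))\<^sup>2 \<le> 2*(norm a)\<^sup>2 + 2*(norm b)\<^sup>2"
proof -
  have "norm (a+b) \<le> norm a + norm b" by (rule norm_triangle_ineq)
  hence "(norm (a+b))\<^sup>2 \<le> (norm a + norm b)\<^sup>2" by (simp add: power_mono)
  also have "\<dots> \<le> 2*(norm a)\<^sup>2 + 2*(norm b)\<^sup>2" using power2_diff[of "norm a" "norm b"] power2_sum[of "norm a" "norm b"] zero_le_power2[of "norm a - norm b"] by linarith
  finally show ?thesis .
qed

lemma mnorm_sq: "(norm (A *v x))\<^sup>2 \<le> (mnorm A)\<^sup>2 * (norm x)\<^sup>2"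
proof -
  have "norm (A *v x) \<le> mnorm A * norm x" unfolding mnorm_def by (rule onorm) simp
  hence "(norm (A *v x))\<^sup>2 \<le> (mnorm A * norm x)\<^sup>2" by (simp add: power_mono)
  thus ?thesis by (simp add: power_mult_distrib)
qed

lemma mv_cont: "continuous_on S (\<lambda>z. (A::real^'n^'m) *v (z - c))"
proof -
  have "continuous_on UNIV ((*v) A)" by (rule linear_continuous_on) simp
  hence h: "continuous_on S ((*v) A)" by (rule continuous_on_subset) simp
  show ?thesis unfolding matrix_vector_mult_diff_distrib
    by (intro continuous_on_diff h continuous_on_const)
qed

lemma mv_cont2: "continuous_on S f \<Longrightarrow> continuous_on S (\<lambda>z. (A::real^'n^'m) *v f z)"
proof -
  assume f: "continuous_on S f"
  have "continuous_on UNIV ((*v) A)" by (rule linear_continuous_on) simp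
  thus ?thesis using continuous_on_compose2[OF _ f, of UNIV "(*v) A"] by simp
qed

lemma prox_ex:
  fixes Xi :: "(real^'n) set" and Ai :: "real^'n^'m"
  assumes "compact Xi" "Xi \<noteq> {}" "convex_on UNIV \<phi>"
  shows "proxblk Xi \<phi> Ai yv xh \<beta> \<in> Xi \<and> (\<forall>w\<in>Xi.
        \<phi> (proxblk Xi \<phi> Ai yv xh \<beta>) + yv \<bullet> (Ai *v (proxblk Xi \<phi> Ai yv xh \<beta> - xh)) + Lpsi Ai \<beta> / 2 * (norm (proxblk Xi \<phi> Ai yv xh \<beta> - xh))\<^sup>2
        \<le> \<phi> w + yv \<bullet> (Ai *v (w - xh)) + Lpsi Ai \<beta> / 2 * (norm (w - xh))\<^sup>2)"
proof -
  have c: "continuous_on UNIV \<phi>" by (rule convex_on_continuous[OF open_UNIV assms(3)])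
  have "continuous_on Xi (\<lambda>z. \<phi> z + yv \<bullet> (Ai *v (z - xh)) + Lpsi Ai \<beta> / 2 * (norm (z - xh))\<^sup>2)"
    by (intro continuous_intros continuous_on_subset[OF c] mv_cont) auto
  from continuous_attains_inf[OF assms(1,2) this]
  have "\<exists>z. z \<in> Xi \<and> (\<forall>w\<in>Xi. \<phi> z + yv \<bullet> (Ai *v (z - xh)) + Lpsi Ai \<beta> / 2 * (norm (z - xh))\<^sup>2
        \<le> \<phi> w + yv \<bullet> (Ai *v (w - xh)) + Lpsi Ai \<beta> / 2 * (norm (w - xh))\<^sup>2)" by blast
  from someI_ex[OF this] show ?thesis unfolding proxblk_def .
qed

lemma xstar_ex:
  fixes X1 :: "(real^'n1) set" and X2 :: "(real^'n2) set"
    and A1 :: "real^'n1^'m" and A2 :: "real^'n2^'m"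
  assumes "compact X1" "X1 \<noteq> {}" "compact X2" "X2 \<noteq> {}" "convex_on UNIV \<phi>1" "convex_on UNIV \<phi>2"
    "continuous_on X1 p1" "continuous_on X2 p2"
  shows "xstar X1 X2 \<phi>1 \<phi>2 A1 A2 b p1 p2 y \<beta> \<in> X1 \<times> X2 \<and>
    (\<forall>w\<in>X1 \<times> X2. lagr \<phi>1 \<phi>2 A1 A2 b p1 p2 \<beta> y (xstar X1 X2 \<phi>1 \<phi>2 A1 A2 b p1 p2 y \<beta>) \<le> lagr \<phi>1 \<phi>2 A1 A2 b p1 p2 \<beta> y w)"
proof -
  have c1: "continuous_on UNIV \<phi>1" by (rule convex_on_continuous[OF open_UNIV assms(5)])
  have c2: "continuous_on UNIV \<phi>2" by (rule convex_on_continuous[OF open_UNIV assms(6)])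
  have f: "continuous_on (X1\<times>X2) fst" "continuous_on (X1\<times>X2) snd"
    by (auto intro: continuous_intros)
  have "continuous_on (X1 \<times> X2) (lagr \<phi>1 \<phi>2 A1 A2 b p1 p2 \<beta> y)"
    unfolding lagr_def
    apply (intro continuous_intros mv_cont2 f continuous_on_compose2[OF c1 f(1)] continuous_on_compose2[OF c2 f(2)]
       continuous_on_compose2[OF assms(7) f(1)] continuous_on_compose2[OF assms(8) f(2)])
    by auto
  from continuous_attains_inf[OF compact_Times[OF assms(1,3)] _ this] assms(2,4)
  have "\<exists>z. z \<in> X1\<times>X2 \<and> (\<forall>w\<in>X1\<times>X2. lagr \<phi>1 \<phi>2 A1 A2 b p1 p2 \<beta> y z \<le> lagr \<phi>1 \<phi>2 A1 A2 b p1 p2 \<beta> y w)" by blast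
  from someI_ex[OF this] show ?thesis unfolding xstar_def .
qed

lemma lagr_strong:
  fixes X1 :: "(real^'n1) set" and X2 :: "(real^'n2) set"
    and A1 :: "real^'n1^'m" and A2 :: "real^'n2^'m"
  assumes cx: "convex_on UNIV \<phi>1" "convex_on UNIV \<phi>2"
    and sc: "strongly_convex_on X1 p1 \<sigma>1" "strongly_convex_on X2 p2 \<sigma>2"
    and bp: "\<beta> > 0" and z: "z1 \<in> X1" "z2 \<in> X2"
    and mn: "\<forall>w\<in>X1 \<times> X2. lagr \<phi>1 \<phi>2 A1 A2 b p1 p2 \<beta> y (z1,z2) \<le> lagr \<phi>1 \<phi>2 A1 A2 b p1 p2 \<beta> y w"
    and v: "v1 \<in> X1" "v2 \<in> X2"
  shows "lagr \<phi>1 \<phi>2 A1 A2 b p1 p2 \<beta> y (z1,z2) + \<beta>*(\<sigma>1/2*(norm(v1-z1))\<^sup>2 + \<sigma>2/2*(norm(v2-z2))\<^sup>2)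
     \<le> lagr \<phi>1 \<phi>2 A1 A2 b p1 p2 \<beta> y (v1,v2)"
proof (rule min_strong)
  fix t :: real assume t: "0 < t" "t < 1"
  define m1 where "m1 = (1-t) *\<^sub>R z1 + t *\<^sub>R v1"
  define m2 where "m2 = (1-t) *\<^sub>R z2 + t *\<^sub>R v2"
  have cvx: "convex X1" "convex X2" using sc unfolding strongly_convex_on_def by auto
  have m: "m1 \<in> X1" "m2 \<in> X2" unfolding m1_def m2_def using cvx z v t
    by (auto intro: convexD)
  have e1: "\<phi>1 m1 \<le> (1-t) * \<phi>1 z1 + t * \<phi>1 v1" unfolding m1_def using convex_onD[OF cx(1)] t by simp
  have e2: "\<phi>2 m2 \<le> (1-t) * \<phi>2 z2 + t * \<phi>2 v2" unfolding m2_def using convex_onD[OF cx(2)] t by simp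
  have q1: "p1 m1 \<le> (1-t) * p1 z1 + t * p1 v1 - \<sigma>1/2*t*(1-t)*(norm (v1-z1))\<^sup>2"
  proof -
    have "p1 m1 \<le> (1-t) * p1 z1 + t * p1 v1 - \<sigma>1/2*t*(1-t)*(norm (z1-v1))\<^sup>2"
      using sc(1) z(1) v(1) t unfolding strongly_convex_on_def m1_def by auto
    thus ?thesis by (simp add: norm_minus_commute)
  qed
  have q2: "p2 m2 \<le> (1-t) * p2 z2 + t * p2 v2 - \<sigma>2/2*t*(1-t)*(norm (v2-z2))\<^sup>2"
  proof -
    have "p2 m2 \<le> (1-t) * p2 z2 + t * p2 v2 - \<sigma>2/2*t*(1-t)*(norm (z2-v2))\<^sup>2"
      using sc(2) z(2) v(2) t unfolding strongly_convex_on_def m2_def by auto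
    thus ?thesis by (simp add: norm_minus_commute)
  qed
  have lin: "y \<bullet> (A1 *v m1 + A2 *v m2 - b) = (1-t) * (y \<bullet> (A1 *v z1 + A2 *v z2 - b)) + t * (y \<bullet> (A1 *v v1 + A2 *v v2 - b))"
  proof -
    have "A1 *v m1 + A2 *v m2 - b = (1-t) *\<^sub>R (A1 *v z1 + A2 *v z2 - b) + t *\<^sub>R (A1 *v v1 + A2 *v v2 - b)"
      unfolding m1_def m2_def by (simp add: algebra_simps)
    thus ?thesis by (simp add: inner_add_right inner_diff_right)
  qed
  have bq: "\<beta> * (p1 m1 + p2 m2) \<le> \<beta> * ((1-t) * p1 z1 + t * p1 v1 - \<sigma>1/2*t*(1-t)*(norm (v1-z1))\<^sup>2
      + ((1-t) * p2 z2 + t * p2 v2 - \<sigma>2/2*t*(1-t)*(norm (v2-z2))\<^sup>2))"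
    using q1 q2 bp by (intro mult_left_mono) auto
  have "lagr \<phi>1 \<phi>2 A1 A2 b p1 p2 \<beta> y (z1,z2) \<le> lagr \<phi>1 \<phi>2 A1 A2 b p1 p2 \<beta> y (m1,m2)"
    using mn m by auto
  also have "\<dots> \<le> (1 - t) * lagr \<phi>1 \<phi>2 A1 A2 b p1 p2 \<beta> y (z1,z2) + t * lagr \<phi>1 \<phi>2 A1 A2 b p1 p2 \<beta> y (v1,v2) -
         t * (1 - t) * (\<beta>*(\<sigma>1/2*(norm(v1-z1))\<^sup>2 + \<sigma>2/2*(norm(v2-z2))\<^sup>2))"
    unfolding lagr_def fst_conv snd_conv lin using e1 e2 bq
    by (simp add: algebra_simps)
  finally show "lagr \<phi>1 \<phi>2 A1 A2 b p1 p2 \<beta> y (z1,z2) \<le> (1 - t) * lagr \<phi>1 \<phi>2 A1 A2 b p1 p2 \<beta> y (z1,z2) + t * lagr \<phi>1 \<phi>2 A1 A2 b p1 p2 \<beta> y (v1,v2) -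
         t * (1 - t) * (\<beta>*(\<sigma>1/2*(norm(v1-z1))\<^sup>2 + \<sigma>2/2*(norm(v2-z2))\<^sup>2))" .
qed

theorem theorem1:
  fixes X1 :: "(real^'n1) set" and X2 :: "(real^'n2) set"
    and \<phi>1 :: "real^'n1 \<Rightarrow> real" and \<phi>2 :: "real^'n2 \<Rightarrow> real"
    and A1 :: "real^'n1^'m" and A2 :: "real^'n2^'m" and b :: "real^'m"
    and p1 :: "real^'n1 \<Rightarrow> real" and p2 :: "real^'n2 \<Rightarrow> real"
    and \<sigma>1 \<sigma>2 :: real and xc1 :: "real^'n1" and xc2 :: "real^'n2"
    and \<beta>1 \<beta>2 \<tau> :: real and xbar :: "(real^'n1) \<times> (real^'n2)" and ybar :: "real^'m"
  assumes X1: "X1 \<noteq> {}" "closed X1" "convex X1" "bounded X1"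
    and X2: "X2 \<noteq> {}" "closed X2" "convex X2" "bounded X2"
    and phi: "convex_on UNIV \<phi>1" "convex_on UNIV \<phi>2"
    and prox: "prox_function X1 p1 \<sigma>1 xc1" "prox_function X2 p2 \<sigma>2 xc2"
    and beta: "\<beta>1 > 0" "\<beta>2 > 0"
    and tau: "0 < \<tau>" "\<tau> < 1"
    and xbar_in: "xbar \<in> X1 \<times> X2"
    and egap: "ffun \<phi>1 \<phi>2 A1 A2 b xbar \<beta>2 \<le> dfun X1 X2 \<phi>1 \<phi>2 A1 A2 b p1 p2 ybar \<beta>1"
    and cond: "\<beta>1 * \<beta>2 \<ge> 2 * \<tau>\<^sup>2 / (1 - \<tau>)\<^sup>2 * max ((mnorm A1)\<^sup>2 / \<sigma>1) ((mnorm A2)\<^sup>2 / \<sigma>2)"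
  shows
    "let \<beta>1p = (1 - \<tau>) * \<beta>1; \<beta>2p = (1 - \<tau>) * \<beta>2;
         xs = xstar X1 X2 \<phi>1 \<phi>2 A1 A2 b p1 p2 ybar \<beta>1;
         xhat = ((1 - \<tau>) *\<^sub>R fst xbar + \<tau> *\<^sub>R fst xs, (1 - \<tau>) *\<^sub>R snd xbar + \<tau> *\<^sub>R snd xs);
         ybarp = (1 - \<tau>) *\<^sub>R ybar + \<tau> *\<^sub>R ystar A1 A2 b xhat \<beta>2p;
         xbarp = Pmap X1 X2 \<phi>1 \<phi>2 A1 A2 b xhat \<beta>2p
     in xbarp \<in> X1 \<times> X2 \<and>
        ffun \<phi>1 \<phi>2 A1 A2 b xbarp \<beta>2p \<le> dfun X1 X2 \<phi>1 \<phi>2 A1 A2 b p1 p2 ybarp \<beta>1p"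
proof -
  have cX1: "compact X1" using X1 compact_eq_bounded_closed by auto
  have cX2: "compact X2" using X2 compact_eq_bounded_closed by auto
  have pr1: "continuous_on X1 p1" "strongly_convex_on X1 p1 \<sigma>1" "\<sigma>1 > 0"
    using prox(1) unfolding prox_function_def by auto
  have pr2: "continuous_on X2 p2" "strongly_convex_on X2 p2 \<sigma>2" "\<sigma>2 > 0"
    using prox(2) unfolding prox_function_def by auto
  define \<beta>1p where "\<beta>1p = (1 - \<tau>) * \<beta>1"
  define \<beta>2p where "\<beta>2p = (1 - \<tau>) * \<beta>2"
  have b2p: "\<beta>2p > 0" using tau beta unfolding \<beta>2p_def by simp
  define xs where "xs = xstar X1 X2 \<phi>1 \<phi>2 A1 A2 b p1 p2 ybar \<beta>1"
  have xsP: "xs \<in> X1 \<times> X2 \<and> (\<forall>w\<in>X1 \<times> X2. lagr \<phi>1 \<phi>2 A1 A2 b p1 p2 \<beta>1 ybar xs \<le> lagr \<phi>1 \<phi>2 A1 A2 b p1 p2 \<beta>1 ybar w)"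
    unfolding xs_def by (rule xstar_ex[OF cX1 X1(1) cX2 X2(1) phi pr1(1) pr2(1)])
  obtain z1 z2 where xs_eq: "xs = (z1, z2)" by (cases xs)
  obtain xb1 xb2 where xb_eq: "xbar = (xb1, xb2)" by (cases xbar)
  have zin: "z1 \<in> X1" "z2 \<in> X2" using xsP xs_eq by auto
  have xbin: "xb1 \<in> X1" "xb2 \<in> X2" using xbar_in xb_eq by auto
  define h1 where "h1 = (1 - \<tau>) *\<^sub>R xb1 + \<tau> *\<^sub>R z1"
  define h2 where "h2 = (1 - \<tau>) *\<^sub>R xb2 + \<tau> *\<^sub>R z2"
  define yh where "yh = ystar A1 A2 b (h1, h2) \<beta>2p"
  define yp where "yp = (1 - \<tau>) *\<^sub>R ybar + \<tau> *\<^sub>R yh"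
  define q1 where "q1 = proxblk X1 \<phi>1 A1 yh h1 \<beta>2p"
  define q2 where "q2 = proxblk X2 \<phi>2 A2 yh h2 \<beta>2p"
  define K1 where "K1 = Lpsi A1 \<beta>2p / 2"
  define K2 where "K2 = Lpsi A2 \<beta>2p / 2"
  have q1P: "q1 \<in> X1 \<and> (\<forall>w\<in>X1. \<phi>1 q1 + yh \<bullet> (A1 *v (q1 - h1)) + K1 * (norm (q1 - h1))\<^sup>2
        \<le> \<phi>1 w + yh \<bullet> (A1 *v (w - h1)) + K1 * (norm (w - h1))\<^sup>2)"
    unfolding q1_def K1_def by (rule prox_ex[OF cX1 X1(1) phi(1)])
  have q2P: "q2 \<in> X2 \<and> (\<forall>w\<in>X2. \<phi>2 q2 + yh \<bullet> (A2 *v (q2 - h2)) + K2 * (norm (q2 - h2))\<^sup>2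
        \<le> \<phi>2 w + yh \<bullet> (A2 *v (w - h2)) + K2 * (norm (w - h2))\<^sup>2)"
    unfolding q2_def K2_def by (rule prox_ex[OF cX2 X2(1) phi(2)])
  have main: "ffun \<phi>1 \<phi>2 A1 A2 b (q1, q2) \<beta>2p \<le> dfun X1 X2 \<phi>1 \<phi>2 A1 A2 b p1 p2 yp \<beta>1p"
  proof -
    have ne: "lagr \<phi>1 \<phi>2 A1 A2 b p1 p2 \<beta>1p yp ` (X1 \<times> X2) \<noteq> {}" using X1(1) X2(1) by auto
    show ?thesis unfolding dfun_def
    proof (rule cInf_greatest[OF ne])
      fix val assume "val \<in> lagr \<phi>1 \<phi>2 A1 A2 b p1 p2 \<beta>1p yp ` (X1 \<times> X2)"
      then obtain v1 v2 where v: "v1 \<in> X1" "v2 \<in> X2" and val: "val = lagr \<phi>1 \<phi>2 A1 A2 b p1 p2 \<beta>1p yp (v1, v2)"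
        by auto
      define ub where "ub = A1 *v xb1 + A2 *v xb2 - b"
      define w where "w = A1 *v z1 + A2 *v z2 - b"
      define u where "u = A1 *v h1 + A2 *v h2 - b"
      define e1 where "e1 = q1 - h1"
      define e2 where "e2 = q2 - h2"
      define n1 where "n1 = (norm (v1 - z1))\<^sup>2"
      define n2 where "n2 = (norm (v2 - z2))\<^sup>2"
      define Lbv where "Lbv = lagr \<phi>1 \<phi>2 A1 A2 b p1 p2 \<beta>1 ybar (v1, v2)"
      define Lbz where "Lbz = lagr \<phi>1 \<phi>2 A1 A2 b p1 p2 \<beta>1 ybar (z1, z2)"
      define S where "S = yh \<bullet> (A1 *v v1 + A2 *v v2 - b)"
      define s1 where "s1 = yh \<bullet> (A1 *v (v1 - z1))"
      define s2 where "s2 = yh \<bullet> (A2 *v (v2 - z2))"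
      define nu where "nu = (norm u)\<^sup>2 / (2 * \<beta>2p)"
      define nb where "nb = (norm ub)\<^sup>2 / (2 * \<beta>2)"
      have u_eq: "u = (1 - \<tau>) *\<^sub>R ub + \<tau> *\<^sub>R w"
        unfolding u_def ub_def w_def h1_def h2_def by (simp add: algebra_simps)
      have yh_eq: "yh = (1 / \<beta>2p) *\<^sub>R u" unfolding yh_def ystar_def u_def by simp
      have Aq: "A1 *v q1 + A2 *v q2 - b = u + (A1 *v e1 + A2 *v e2)"
        unfolding u_def e1_def e2_def by (simp add: algebra_simps)
      have U2: "1 / (2 * \<beta>2p) * (norm (A1 *v q1 + A2 *v q2 - b))\<^sup>2
          \<le> nu + yh \<bullet> (A1 *v e1) + yh \<bullet> (A2 *v e2) + K1 * (norm e1)\<^sup>2 + K2 * (norm e2)\<^sup>2"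
      proof -
        define d where "d = A1 *v e1 + A2 *v e2"
        have nd: "(norm d)\<^sup>2 \<le> 2 * ((mnorm A1)\<^sup>2 * (norm e1)\<^sup>2) + 2 * ((mnorm A2)\<^sup>2 * (norm e2)\<^sup>2)"
          using norm_sum_sq[of "A1 *v e1" "A2 *v e2"] mnorm_sq[of A1 e1] mnorm_sq[of A2 e2]
          unfolding d_def by linarith
        have sq: "(norm (u + d))\<^sup>2 = (norm u)\<^sup>2 + 2 * (u \<bullet> d) + (norm d)\<^sup>2"
          unfolding power2_norm_eq_inner by (simp add: inner_add_left inner_add_right inner_commute)
        have yd: "yh \<bullet> (A1 *v e1) + yh \<bullet> (A2 *v e2) = (u \<bullet> d) / \<beta>2p"
          unfolding yh_eq d_def by (simp add: inner_add_right add_divide_distrib)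
        have K: "K1 = (mnorm A1)\<^sup>2 / \<beta>2p" "K2 = (mnorm A2)\<^sup>2 / \<beta>2p"
          unfolding K1_def K2_def Lpsi_def by auto
        have "1 / (2 * \<beta>2p) * (norm (u + d))\<^sup>2 \<le> nu + (u \<bullet> d) / \<beta>2p + K1 * (norm e1)\<^sup>2 + K2 * (norm e2)\<^sup>2"
          unfolding sq nu_def K using b2p nd apply (simp add: divide_simps algebra_simps)
          using mult_left_mono[OF nd, of \<beta>2p] b2p by (simp add: algebra_simps)
        thus ?thesis unfolding Aq d_def[symmetric] using yd by linarith
      qed
      have U3: "\<phi>1 q1 + yh \<bullet> (A1 *v e1) + K1 * (norm e1)\<^sup>2 \<le> (1 - \<tau>) * \<phi>1 xb1 + \<tau> * \<phi>1 v1 + \<tau> * s1 + K1 * (\<tau>\<^sup>2 * n1)"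
      proof -
        define w1 where "w1 = (1 - \<tau>) *\<^sub>R xb1 + \<tau> *\<^sub>R v1"
        have w1in: "w1 \<in> X1" unfolding w1_def using X1(3) xbin(1) v(1) tau by (auto intro: convexD)
        have wh: "w1 - h1 = \<tau> *\<^sub>R (v1 - z1)" unfolding w1_def h1_def by (simp add: algebra_simps)
        have nw: "(norm (w1 - h1))\<^sup>2 = \<tau>\<^sup>2 * n1" unfolding wh n1_def using tau by (simp add: power_mult_distrib)
        have sw: "yh \<bullet> (A1 *v (w1 - h1)) = \<tau> * s1" unfolding wh s1_def by (simp add: matrix_vector_mult_scaleR)
        have cw: "\<phi>1 w1 \<le> (1 - \<tau>) * \<phi>1 xb1 + \<tau> * \<phi>1 v1" unfolding w1_def using convex_onD[OF phi(1)] tau by simp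
        show ?thesis using q1P w1in nw sw cw unfolding e1_def by force
      qed
      have U3b: "\<phi>2 q2 + yh \<bullet> (A2 *v e2) + K2 * (norm e2)\<^sup>2 \<le> (1 - \<tau>) * \<phi>2 xb2 + \<tau> * \<phi>2 v2 + \<tau> * s2 + K2 * (\<tau>\<^sup>2 * n2)"
      proof -
        define w2 where "w2 = (1 - \<tau>) *\<^sub>R xb2 + \<tau> *\<^sub>R v2"
        have w2in: "w2 \<in> X2" unfolding w2_def using X2(3) xbin(2) v(2) tau by (auto intro: convexD)
        have wh: "w2 - h2 = \<tau> *\<^sub>R (v2 - z2)" unfolding w2_def h2_def by (simp add: algebra_simps)
        have nw: "(norm (w2 - h2))\<^sup>2 = \<tau>\<^sup>2 * n2" unfolding wh n2_def using tau by (simp add: power_mult_distrib)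
        have sw: "yh \<bullet> (A2 *v (w2 - h2)) = \<tau> * s2" unfolding wh s2_def by (simp add: matrix_vector_mult_scaleR)
        have cw: "\<phi>2 w2 \<le> (1 - \<tau>) * \<phi>2 xb2 + \<tau> * \<phi>2 v2" unfolding w2_def using convex_onD[OF phi(2)] tau by simp
        show ?thesis using q2P w2in nw sw cw unfolding e2_def by force
      qed
      have C: "K1 * (\<tau>\<^sup>2 * n1) \<le> (1 - \<tau>) * \<beta>1 * (\<sigma>1 / 2 * n1)" if i: "i = (1::nat)" for i
      proof -
        have c1: "\<beta>1 * \<beta>2 \<ge> 2 * \<tau>\<^sup>2 / (1 - \<tau>)\<^sup>2 * ((mnorm A1)\<^sup>2 / \<sigma>1)"
          using cond tau by (smt (verit) max.cobounded1 mult_left_mono zero_le_divide_iff zero_le_power2 zero_le_numeral mult_nonneg_nonneg)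
        have "2 * \<tau>\<^sup>2 * (mnorm A1)\<^sup>2 \<le> (1 - \<tau>)\<^sup>2 * \<beta>1 * \<beta>2 * \<sigma>1"
          using c1 tau pr1(3) by (simp add: divide_simps algebra_simps)
        hence "K1 * \<tau>\<^sup>2 \<le> (1 - \<tau>) * \<beta>1 * (\<sigma>1 / 2)"
          unfolding K1_def Lpsi_def \<beta>2p_def using tau beta by (simp add: divide_simps power2_eq_square algebra_simps)
        moreover have "0 \<le> n1" unfolding n1_def by simp
        ultimately show ?thesis by (metis mult.assoc mult_right_mono)
      qed
      have Cb: "K2 * (\<tau>\<^sup>2 * n2) \<le> (1 - \<tau>) * \<beta>1 * (\<sigma>2 / 2 * n2)"
      proof -
        have c1: "\<beta>1 * \<beta>2 \<ge> 2 * \<tau>\<^sup>2 / (1 - \<tau>)\<^sup>2 * ((mnorm A2)\<^sup>2 / \<sigma>2)"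
          using cond tau by (smt (verit) max.cobounded2 mult_left_mono zero_le_divide_iff zero_le_power2 zero_le_numeral mult_nonneg_nonneg)
        have "2 * \<tau>\<^sup>2 * (mnorm A2)\<^sup>2 \<le> (1 - \<tau>)\<^sup>2 * \<beta>1 * \<beta>2 * \<sigma>2"
          using c1 tau pr2(3) by (simp add: divide_simps algebra_simps)
        hence "K2 * \<tau>\<^sup>2 \<le> (1 - \<tau>) * \<beta>1 * (\<sigma>2 / 2)"
          unfolding K2_def Lpsi_def \<beta>2p_def using tau beta by (simp add: divide_simps power2_eq_square algebra_simps)
        moreover have "0 \<le> n2" unfolding n2_def by simp
        ultimately show ?thesis by (metis mult.assoc mult_right_mono)
      qed
      have D2: "Lbz + \<beta>1 * (\<sigma>1 / 2 * n1 + \<sigma>2 / 2 * n2) \<le> Lbv"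
        unfolding Lbz_def Lbv_def n1_def n2_def
        by (rule lagr_strong[OF phi pr1(2) pr2(2) beta(1) zin _ v]) (use xsP xs_eq in auto)
      have D2': "(1 - \<tau>) * Lbz + (1 - \<tau>) * \<beta>1 * (\<sigma>1 / 2 * n1) + (1 - \<tau>) * \<beta>1 * (\<sigma>2 / 2 * n2) \<le> (1 - \<tau>) * Lbv"
      proof -
        have "(1 - \<tau>) * (Lbz + \<beta>1 * (\<sigma>1 / 2 * n1 + \<sigma>2 / 2 * n2)) \<le> (1 - \<tau>) * Lbv"
          using D2 tau by (intro mult_left_mono) auto
        thus ?thesis by (simp add: algebra_simps)
      qed
      have D3: "\<phi>1 xb1 + \<phi>2 xb2 + nb \<le> Lbz"
      proof -
        have "dfun X1 X2 \<phi>1 \<phi>2 A1 A2 b p1 p2 ybar \<beta>1 = Lbz"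
          unfolding dfun_def Lbz_def xs_eq[symmetric] using xsP by (intro cInf_eq_minimum) auto
        thus ?thesis using egap unfolding xb_eq ffun_def nb_def ub_def by simp
      qed
      have D3': "(1 - \<tau>) * \<phi>1 xb1 + (1 - \<tau>) * \<phi>2 xb2 + (1 - \<tau>) * nb \<le> (1 - \<tau>) * Lbz"
      proof -
        have "(1 - \<tau>) * (\<phi>1 xb1 + \<phi>2 xb2 + nb) \<le> (1 - \<tau>) * Lbz"
          using D3 tau by (intro mult_left_mono) auto
        thus ?thesis by (simp add: algebra_simps)
      qed
      have Q: "nu \<le> (1 - \<tau>) * nb + \<tau> * (yh \<bullet> w)"
        using keyq[OF tau beta(2), of ub w] unfolding nu_def nb_def u_eq yh_eq \<beta>2p_def by simp
      have Lin: "\<tau> * s1 + \<tau> * s2 + \<tau> * (yh \<bullet> w) = \<tau> * S"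
      proof -
        have "s1 + s2 + yh \<bullet> w = S" unfolding s1_def s2_def S_def w_def
          by (simp add: inner_add_right inner_diff_right matrix_vector_mult_diff_distrib)
        hence "\<tau> * (s1 + s2 + yh \<bullet> w) = \<tau> * S" by simp
        thus ?thesis by (simp add: distrib_left)
      qed
      have D1: "val = (1 - \<tau>) * Lbv + \<tau> * \<phi>1 v1 + \<tau> * \<phi>2 v2 + \<tau> * S"
        unfolding val Lbv_def lagr_def yp_def \<beta>1p_def S_def
        by (simp add: inner_add_left algebra_simps)
      have F: "ffun \<phi>1 \<phi>2 A1 A2 b (q1, q2) \<beta>2p = \<phi>1 q1 + \<phi>2 q2 + 1 / (2 * \<beta>2p) * (norm (A1 *v q1 + A2 *v q2 - b))\<^sup>2"
        unfolding ffun_def by simp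
      show "ffun \<phi>1 \<phi>2 A1 A2 b (q1, q2) \<beta>2p \<le> val"
        using F U2 U3 U3b C[OF refl] Cb D2' D3' Q Lin D1 by linarith
    qed
  qed
  show ?thesis unfolding Let_def Pmap_def
    using main q1P q2P
    by (simp add: xs_def[symmetric] xs_eq xb_eq h1_def[symmetric] h2_def[symmetric] yh_def[symmetric]
        yp_def[symmetric] q1_def[symmetric] q2_def[symmetric] \<beta>1p_def[symmetric] \<beta>2p_def[symmetric])
qed
end
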